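(* ATL and rCTL are incomparable in expressiveness: (i) there is an ATL formula $\psi$ such that for no rCTL formula $\chi$ and truth value $u\in\mathbb{B}_4$ does it hold that $\mathcal{S},s\models\psi\iff V_{rCTL}(s,\chi)\succeq u$ for all concurrent game structures $\mathcal{S}$ and states $s$ (with $V_{rCTL}$ evaluated in the underlying Kripke structure of $\mathcal{S}$); and (ii) there are an rCTL formula $\chi$ and a truth value $u\in\mathbb{B}_4$ such that for no ATL formula $\psi$ does it hold that $\mathcal{S}_\mathcal{K},s\models\psi\iff V_{rCTL}(s,\chi)\succeq u$ for all Kripke structures $\mathcal{K}$ and states $s$.
   Context: Fix a finite set $\mathrm{AP}$ of atomic propositions. A concurrent game structure (CGS) is a tuple $\mathcal{S}=(St,Ag,Ac,\delta,\ell)$ where $St$ is a finite set of states, $Ag$ a finite set of agents, $Ac$ a finite set of actions, $\ell:St\to 2^{\mathrm{AP}}$ a labeling, and $\delta:St\times AV\to St$ a transition function, where $AV$ is the set of action vectors for $Ag$ (an action vector for $A\subseteq Ag$ is a map $A\to Ac$). A state $s'$ is a successor of $s$ if $s'=\delta(s,v)$ for some $v\in AV$. A path is an infinite sequence $\pi=s_0s_1s_2\cdots$ of states with $s_{n+1}$ a successor of $s_n$ for all $n$; write $\pi[n]=s_n$. A strategy for an agent is a function $f:St^+\to Ac$. For $A\subseteq Ag$ and a set $F_A=\{f_a\mid a\in A\}$ of strategies, one for each agent in $A$, $out(s,F_A)$ is the set of paths $s_0s_1\cdots$ with $s_0=s$ such that for every $n\ge 0$ there is $v\in AV$ with $v(a)=f_a(s_0\cdots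 s_n)$ for all $a\in A$ and $s_{n+1}=\delta(s_n,v)$. $\mathbb{B}_4=\{1111,0111,0011,0001,0000\}$ is totally ordered by $1111\succ0111\succ0011\succ0001\succ0000$; for $b=b_1b_2b_3b_4\in\mathbb{B}_4$ and $k\in\{1,2,3,4\}$, $b[k]=b_k$; max and min on $\mathbb{B}_4$ refer to this order, and on bits to $0<1$. ATL formulas: state formulas $\varphi::=p\mid\neg\varphi\mid\varphi\vee\varphi\mid\varphi\wedge\varphi\mid\varphi\to\varphi\mid\langle\!\langle A\rangle\!\rangle\Phi\mid[\![A]\!]\Phi$ and path formulas $\Phi::=\bigcirc\varphi\mid\Diamond\varphi\mid\Box\varphi$, with the standard Boolean semantics: $\mathcal{S},s\models p$ iff $p\in\ell(s)$; Boolean connectives as usual; $\mathcal{S},s\models\langle\!\langle A\rangle\!\rangle\Phi$ iff there is a set $F_A$ of strategies (one per agent in $A$) with $\mathcal{S},\pi\models\Phi$ for all $\pi\in out(s,F_A)$; $\mathcal{S},s\models[\![A]\!]\Phi$ iff for every such $F_A$ some $\pi\in out(s,F_A)$ satisfies $\mathcal{S},\pi\models\Phi$; $\mathcal{S},\pi\models\bigcirc\varphi$ iff $\mathcal{S},\pi[1]\models\varphi$; $\mathcal{S},\pi\models\Diamond\varphi$ iff $\mathcal{S},\pi[i]\models\varphi$ for some $i\ge0$; $\mathcal{S},\pi\models\Box\varphi$ iff $\mathcal{S},\pi[i]\models\varphi$ for all $i\ge0$. A Kripke structure is $\mathcal{K}=(S,I,R,L)$ with finite state set $S$, initial states $I\subseteq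 S$, transition relation $R\subseteq S\times S$ such that every state has an $R$-successor, and labeling $L:S\to2^{\mathrm{AP}}$; a path is an infinite sequence $s_0s_1\cdots$ with $(s_i,s_{i+1})\in R$; $\mathit{paths}(s)$ is the set of paths starting in $s$. rCTL formulas: state formulas $\varphi::=p\mid\neg\varphi\mid\varphi\vee\varphi\mid\varphi\wedge\varphi\mid\varphi\to\varphi\mid\exists\Phi\mid\forall\Phi$, path formulas $\Phi::=\dot\bigcirc\varphi\mid\dot\Diamond\varphi\mid\dot\Box\varphi$. The valuation $V_{rCTL}$ into $\mathbb{B}_4$: $V_{rCTL}(s,p)=1111$ if $p\in L(s)$, else $0000$; $\vee,\wedge$ are max, min; $V_{rCTL}(s,\neg\varphi)=0000$ if $V_{rCTL}(s,\varphi)=1111$, else $1111$; $V_{rCTL}(s,\varphi_1\to\varphi_2)=1111$ if $V_{rCTL}(s,\varphi_1)\preceq V_{rCTL}(s,\varphi_2)$, else $V_{rCTL}(s,\varphi_2)$; $V_{rCTL}(s,\exists\Phi)=\max_{\pi\in\mathit{paths}(s)}V_{rCTL}(\pi,\Phi)$, $V_{rCTL}(s,\forall\Phi)=\min_{\pi\in\mathit{paths}(s)}V_{rCTL}(\pi,\Phi)$; $V_{rCTL}(\pi,\dot\bigcirc\varphi)=V_{rCTL}(\pi[1],\varphi)$; $V_{rCTL}(\pi,\dot\Diamond\varphi)[k]=\max_{i\ge0}V_{rCTL}(\pi[i],\varphi)[k]$; $V_{rCTL}(\pi,\dot\Box\varphi)=b_1b_2b_3b_4$ with $b_1=\min_{i}V_{rCTL}(\pi[i],\varphi)[1]$,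 $b_2=\max_{i}\min_{j\ge i}V_{rCTL}(\pi[j],\varphi)[2]$, $b_3=\min_{i}\max_{j\ge i}V_{rCTL}(\pi[j],\varphi)[3]$, $b_4=\max_{i}V_{rCTL}(\pi[i],\varphi)[4]$. The underlying Kripke structure of a CGS $\mathcal{S}$ has the same states and labeling, with $R=\{(s,s')\mid s'\text{ is a successor of }s\}$. The CGS associated with $\mathcal{K}$ is $\mathcal{S}_\mathcal{K}=(S,\{a\},S,\delta,L)$ with a single agent $a$, actions $S$, and $\delta(s,s')=s'$ if $(s,s')\in R$, and $\delta(s,s')=s''$ for some fixed $s''$ with $(s,s'')\in R$ otherwise. *)

theory Defs
  imports Main "HOL-Library.FuncSet"
begin

text \<open>States, agents and actions are natural numbers; a CGS is given by explicit
  finite carrier sets. The type parameter 'p is the (finite) set AP of atomic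
  propositions.\<close>

record 'p cgs =
  cSt :: "nat set"
  cAg :: "nat set"
  cAc :: "nat set"
  cdelta :: "nat \<Rightarrow> (nat \<Rightarrow> nat) \<Rightarrow> nat"
  clab :: "nat \<Rightarrow> 'p set"

definition AV :: "'p cgs \<Rightarrow> (nat \<Rightarrow> nat) set" where
  "AV G = cAg G \<rightarrow>\<^sub>E cAc G"

definition cgs_wf :: "'p cgs \<Rightarrow> bool" where
  "cgs_wf G \<longleftrightarrow> finite (cSt G) \<and> finite (cAg G) \<and> finite (cAc G) \<and> cAc G \<noteq> {}
     \<and> (\<forall>s\<in>cSt G. \<forall>v\<in>AV G. cdelta G s v \<in> cSt G)"

definition is_succ :: "'p cgs \<Rightarrow> nat \<Rightarrow> nat \<Rightarrow> bool" where
  "is_succ G s s' \<longleftrightarrow> (\<exists>v\<in>AV G. s' = cdelta G s v)"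

definition hist :: "(nat \<Rightarrow> nat) \<Rightarrow> nat \<Rightarrow> nat list" where
  "hist \<pi> n = map \<pi> [0..<Suc n]"

text \<open>A set of strategies F_A = {f_a | a in A}, encoded as F a = f_a; a strategy
  maps histories to actions.\<close>
definition strats :: "'p cgs \<Rightarrow> nat set \<Rightarrow> (nat \<Rightarrow> nat list \<Rightarrow> nat) \<Rightarrow> bool" where
  "strats G A F \<longleftrightarrow> (\<forall>a\<in>A \<inter> cAg G. \<forall>h. F a h \<in> cAc G)"

definition out :: "'p cgs \<Rightarrow> nat \<Rightarrow> nat set \<Rightarrow> (nat \<Rightarrow> nat list \<Rightarrow> nat) \<Rightarrow> (nat \<Rightarrow> nat) set" where
  "out G s A F = {\<pi>. \<pi> 0 = s \<and> (\<forall>n. \<exists>v\<in>AV G. (\<forall>a\<in>A \<inter> cAg G. v a = F a (hist \<pi> n))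
                                   \<and> \<pi> (Suc n) = cdelta G (\<pi> n) v)}"

datatype temp = Nxt | Evt | Alw

datatype 'p atl =
    AProp 'p
  | ANeg "'p atl"
  | AOr "'p atl" "'p atl"
  | AAnd "'p atl" "'p atl"
  | AImp "'p atl" "'p atl"
  | ACoal "nat set" temp "'p atl"
  | ADual "nat set" temp "'p atl"

fun holds_path :: "temp \<Rightarrow> (nat \<Rightarrow> bool) \<Rightarrow> (nat \<Rightarrow> nat) \<Rightarrow> bool" where
  "holds_path Nxt P \<pi> = P (\<pi> 1)"
| "holds_path Evt P \<pi> = (\<exists>i. P (\<pi> i))"
| "holds_path Alw P \<pi> = (\<forall>i. P (\<pi> i))"

fun atl_sat :: "'p cgs \<Rightarrow> nat \<Rightarrow> 'p atl \<Rightarrow> bool" where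
  "atl_sat G s (AProp p) = (p \<in> clab G s)"
| "atl_sat G s (ANeg \<phi>) = (\<not> atl_sat G s \<phi>)"
| "atl_sat G s (AOr \<phi> \<psi>) = (atl_sat G s \<phi> \<or> atl_sat G s \<psi>)"
| "atl_sat G s (AAnd \<phi> \<psi>) = (atl_sat G s \<phi> \<and> atl_sat G s \<psi>)"
| "atl_sat G s (AImp \<phi> \<psi>) = (atl_sat G s \<phi> \<longrightarrow> atl_sat G s \<psi>)"
| "atl_sat G s (ACoal A T \<phi>) =
     (\<exists>F. strats G A F \<and> (\<forall>\<pi>\<in>out G s A F. holds_path T (\<lambda>t. atl_sat G t \<phi>) \<pi>))"
| "atl_sat G s (ADual A T \<phi>) =
     (\<forall>F. strats G A F \<longrightarrow> (\<exists>\<pi>\<in>out G s A F. holds_path T (\<lambda>t. atl_sat G t \<phi>) \<pi>))"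

record 'p kripke =
  kS :: "nat set"
  kI :: "nat set"
  kR :: "(nat \<times> nat) set"
  kL :: "nat \<Rightarrow> 'p set"

definition kripke_wf :: "'p kripke \<Rightarrow> bool" where
  "kripke_wf K \<longleftrightarrow> finite (kS K) \<and> kI K \<subseteq> kS K \<and> kR K \<subseteq> kS K \<times> kS K
     \<and> (\<forall>s\<in>kS K. \<exists>s'. (s, s') \<in> kR K)"

definition kpaths :: "'p kripke \<Rightarrow> nat \<Rightarrow> (nat \<Rightarrow> nat) set" where
  "kpaths K s = {\<pi>. \<pi> 0 = s \<and> (\<forall>i. (\<pi> i, \<pi> (Suc i)) \<in> kR K)}"

text \<open>A truth value b1b2b3b4 is the list [b1,b2,b3,b4].\<close>
type_synonym b4 = "bool list"

definition b1111 :: b4 where "b1111 = [True, True, True, True]"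
definition b0111 :: b4 where "b0111 = [False, True, True, True]"
definition b0011 :: b4 where "b0011 = [False, False, True, True]"
definition b0001 :: b4 where "b0001 = [False, False, False, True]"
definition b0000 :: b4 where "b0000 = [False, False, False, False]"

definition B4 :: "b4 set" where
  "B4 = {b1111, b0111, b0011, b0001, b0000}"

definition b4_rank :: "b4 \<Rightarrow> nat" where
  "b4_rank b = (if b = b1111 then 4 else if b = b0111 then 3 else if b = b0011 then 2
                else if b = b0001 then 1 else 0)"

definition b4_le :: "b4 \<Rightarrow> b4 \<Rightarrow> bool" where
  "b4_le b c \<longleftrightarrow> b4_rank b \<le> b4_rank c"

definition bit :: "b4 \<Rightarrow> nat \<Rightarrow> bool" where
  "bit b k = b ! (k - 1)"

definition b4_max :: "b4 \<Rightarrow> b4 \<Rightarrow> b4" where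
  "b4_max x y = (if b4_le x y then y else x)"
definition b4_min :: "b4 \<Rightarrow> b4 \<Rightarrow> b4" where
  "b4_min x y = (if b4_le x y then x else y)"

definition b4_Max :: "b4 set \<Rightarrow> b4" where
  "b4_Max X = (THE b. b \<in> X \<and> (\<forall>c\<in>X. b4_le c b))"
definition b4_Min :: "b4 set \<Rightarrow> b4" where
  "b4_Min X = (THE b. b \<in> X \<and> (\<forall>c\<in>X. b4_le b c))"

datatype 'p rctl =
    RProp 'p
  | RNeg "'p rctl"
  | ROr "'p rctl" "'p rctl"
  | RAnd "'p rctl" "'p rctl"
  | RImp "'p rctl" "'p rctl"
  | REx temp "'p rctl"
  | RAll temp "'p rctl"

fun path_val :: "temp \<Rightarrow> (nat \<Rightarrow> b4) \<Rightarrow> (nat \<Rightarrow> nat) \<Rightarrow> b4" where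
  "path_val Nxt f \<pi> = f (\<pi> 1)"
| "path_val Evt f \<pi> = map (\<lambda>k. \<exists>i. bit (f (\<pi> i)) k) [1, 2, 3, 4]"
| "path_val Alw f \<pi> =
     [\<forall>i. bit (f (\<pi> i)) 1,
      \<exists>i. \<forall>j\<ge>i. bit (f (\<pi> j)) 2,
      \<forall>i. \<exists>j\<ge>i. bit (f (\<pi> j)) 3,
      \<exists>i. bit (f (\<pi> i)) 4]"

fun rval :: "'p kripke \<Rightarrow> nat \<Rightarrow> 'p rctl \<Rightarrow> b4" where
  "rval K s (RProp p) = (if p \<in> kL K s then b1111 else b0000)"
| "rval K s (RNeg \<phi>) = (if rval K s \<phi> = b1111 then b0000 else b1111)"
| "rval K s (ROr \<phi> \<psi>) = b4_max (rval K s \<phi>) (rval K s \<psi>)"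
| "rval K s (RAnd \<phi> \<psi>) = b4_min (rval K s \<phi>) (rval K s \<psi>)"
| "rval K s (RImp \<phi> \<psi>) = (if b4_le (rval K s \<phi>) (rval K s \<psi>) then b1111 else rval K s \<psi>)"
| "rval K s (REx T \<phi>) = b4_Max {path_val T (\<lambda>t. rval K t \<phi>) \<pi> | \<pi>. \<pi> \<in> kpaths K s}"
| "rval K s (RAll T \<phi>) = b4_Min {path_val T (\<lambda>t. rval K t \<phi>) \<pi> | \<pi>. \<pi> \<in> kpaths K s}"

text \<open>Underlying Kripke structure of a CGS (the initial states are irrelevant; we take all states).\<close>
definition kripke_of :: "'p cgs \<Rightarrow> 'p kripke" where
  "kripke_of G = \<lparr>kS = cSt G, kI = cSt G,
                  kR = {(s, s'). s \<in> cSt G \<and> is_succ G s s'}, kL = clab G\<rparr>"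

definition cgs_of :: "'p kripke \<Rightarrow> 'p cgs" where
  "cgs_of K = \<lparr>cSt = kS K, cAg = {0}, cAc = kS K,
     cdelta = (\<lambda>s v. if (s, v 0) \<in> kR K then v 0 else (SOME s''. (s, s'') \<in> kR K)),
     clab = kL K\<rparr>"

end

theory Submission
  imports Defs
begin


definition G1 :: "'p cgs" where
 "G1 = \<lparr>cSt = {0,1,2}, cAg = {0}, cAc = {1,2}, cdelta = (\<lambda>s v. if v 0 = 1 then 1 else 2),
        clab = (\<lambda>s. if s = 1 then UNIV else {})\<rparr>"
definition G2 :: "'p cgs" where
 "G2 = \<lparr>cSt = {0,1,2}, cAg = {1}, cAc = {1,2}, cdelta = (\<lambda>s v. if v 1 = 1 then 1 else 2),
        clab = (\<lambda>s. if s = 1 then UNIV else {})\<rparr>"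

lemma succ_G1: "is_succ (G1::'p cgs) s s' \<longleftrightarrow> s' = 1 \<or> s' = 2"
proof
  assume "is_succ (G1::'p cgs) s s'" thus "s' = 1 \<or> s' = 2" by (auto simp: is_succ_def G1_def split: if_splits)
next
  assume h: "s' = 1 \<or> s' = 2"
  let ?v = "\<lambda>a::nat. if a = 0 then s' else undefined"
  have "?v \<in> AV (G1::'p cgs)" using h by (auto simp: AV_def G1_def PiE_def extensional_def)
  moreover have "s' = cdelta (G1::'p cgs) s ?v" using h by (auto simp: G1_def)
  ultimately show "is_succ (G1::'p cgs) s s'" unfolding is_succ_def by blast
qed

lemma succ_G2: "is_succ (G2::'p cgs) s s' \<longleftrightarrow> s' = 1 \<or> s' = 2"
proof
  assume "is_succ (G2::'p cgs) s s'" thus "s' = 1 \<or> s' = 2" by (auto simp: is_succ_def G2_def split: if_splits)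
next
  assume h: "s' = 1 \<or> s' = 2"
  let ?v = "\<lambda>a::nat. if a = 1 then s' else undefined"
  have "?v \<in> AV (G2::'p cgs)" using h by (auto simp: AV_def G2_def PiE_def extensional_def)
  moreover have "s' = cdelta (G2::'p cgs) s ?v" using h by (auto simp: G2_def)
  ultimately show "is_succ (G2::'p cgs) s s'" unfolding is_succ_def by blast
qed

lemma kof: "kripke_of (G1::'p cgs) = kripke_of G2"
  unfolding kripke_of_def by (simp only: succ_G1 succ_G2) (simp add: G1_def G2_def)

lemma wf1: "cgs_wf (G1::'p cgs)" by (auto simp: cgs_wf_def G1_def AV_def)
lemma wf2: "cgs_wf (G2::'p cgs)" by (auto simp: cgs_wf_def G2_def AV_def)

lemma sat1: "atl_sat (G1::'p cgs) 0 (ACoal {0} Nxt (AProp p))"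
proof -
  have "strats (G1::'p cgs) {0} (\<lambda>a h. 1)" by (simp add: strats_def G1_def)
  moreover have "\<forall>\<pi>\<in>out (G1::'p cgs) 0 {0} (\<lambda>a h. 1). holds_path Nxt (\<lambda>t. atl_sat G1 t (AProp p)) \<pi>"
  proof
    fix \<pi> assume "\<pi> \<in> out (G1::'p cgs) 0 {0} (\<lambda>a h. 1)"
    hence "\<exists>v\<in>AV (G1::'p cgs). (\<forall>a\<in>{0} \<inter> cAg (G1::'p cgs). v a = 1) \<and> \<pi> (Suc 0) = cdelta (G1::'p cgs) (\<pi> 0) v"
      unfolding out_def by blast
    then obtain v where v: "\<forall>a\<in>{0} \<inter> cAg (G1::'p cgs). v a = 1" "\<pi> (Suc 0) = cdelta (G1::'p cgs) (\<pi> 0) v"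
      by blast
    have "v 0 = 1" using v(1) by (simp add: G1_def)
    hence "\<pi> 1 = 1" using v(2) by (simp add: G1_def)
    thus "holds_path Nxt (\<lambda>t. atl_sat G1 t (AProp p)) \<pi>" by (simp add: G1_def)
  qed
  ultimately show ?thesis by auto
qed

lemma sat2: "\<not> atl_sat (G2::'p cgs) 0 (ACoal {0} Nxt (AProp p))"
proof -
  let ?\<pi> = "\<lambda>n::nat. if n = 0 then 0 else (2::nat)"
  have "\<forall>F. ?\<pi> \<in> out (G2::'p cgs) 0 {0} F"
  proof
    fix F
    let ?v = "\<lambda>a::nat. if a = 1 then 2 else undefined"
    have "?v \<in> AV (G2::'p cgs)" by (auto simp: AV_def G2_def PiE_def extensional_def)
    hence "\<exists>v\<in>AV (G2::'p cgs). v 1 \<noteq> 1" by (intro bexI[of _ ?v]) auto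
    thus "?\<pi> \<in> out (G2::'p cgs) 0 {0} F" unfolding out_def by (auto simp: G2_def)
  qed
  thus ?thesis by (fastforce simp: G2_def)
qed

lemma part1: "\<exists>\<psi> :: 'p atl. \<forall>\<chi> :: 'p rctl. \<forall>u\<in>B4.
            \<not> (\<forall>G s. cgs_wf G \<and> s \<in> cSt G \<longrightarrow>
                   (atl_sat G s \<psi> \<longleftrightarrow> b4_le u (rval (kripke_of G) s \<chi>)))"
proof (intro exI allI ballI notI)
  fix \<chi> :: "'p rctl" and u
  assume h: "\<forall>G s. cgs_wf G \<and> s \<in> cSt G \<longrightarrow>
                   (atl_sat G s (ACoal {0} Nxt (AProp undefined)) \<longleftrightarrow> b4_le u (rval (kripke_of G) s \<chi>))"
  have c1: "(0::nat) \<in> cSt (G1::'p cgs)" by (simp add: G1_def)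
  have c2: "(0::nat) \<in> cSt (G2::'p cgs)" by (simp add: G2_def)
  have a: "atl_sat (G1::'p cgs) 0 (ACoal {0} Nxt (AProp undefined)) \<longleftrightarrow> b4_le u (rval (kripke_of G1) 0 \<chi>)"
    using h[rule_format, OF conjI[OF wf1 c1]] .
  have b: "atl_sat (G2::'p cgs) 0 (ACoal {0} Nxt (AProp undefined)) \<longleftrightarrow> b4_le u (rval (kripke_of G2) 0 \<chi>)"
    using h[rule_format, OF conjI[OF wf2 c2]] .
  show False using a b sat1 sat2 kof by metis
qed



definition Ed :: "nat \<Rightarrow> nat \<Rightarrow> nat \<Rightarrow> bool" where
  "Ed n x y = (if even x then (y = x \<or> (2 \<le> x \<and> (y = x+1 \<or> y = x-2)))
               else if x = 2*n+3 then y = x-1 else y = x-3)"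

definition Rn :: "nat \<Rightarrow> (nat \<times> nat) set" where
  "Rn n = {(x,y). x \<le> 2*n+3 \<and> y \<le> 2*n+3 \<and> Ed n x y}"

definition Kn :: "nat \<Rightarrow> 'p kripke" where
  "Kn n = \<lparr>kS = {..2*n+3}, kI = {..2*n+3}, kR = Rn n,
           kL = (\<lambda>x. if odd x then UNIV else {})\<rparr>"

definition lev :: "nat \<Rightarrow> nat \<Rightarrow> nat" where
  "lev n x = (if x = 2*n+3 then n+1 else if even x then x div 2 else x div 2 - 1)"

lemma KnR: "(x,y) \<in> Rn n \<longleftrightarrow> x \<le> 2*n+3 \<and> y \<le> 2*n+3 \<and> Ed n x y"
  by (simp add: Rn_def)

lemma KnR': "kR (Kn n) = Rn n" by (simp add: Kn_def)

lemma KnS: "kS (Kn n) = {..2*n+3}" by (simp add: Kn_def)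

lemma Rn_succ: "x \<le> 2*n+3 \<Longrightarrow> \<exists>s'. (x, s') \<in> Rn n"
  by (rule exI[of _ "if even x then x else if x = 2*n+3 then x - 1 else x - 3"])
     (auto simp: KnR Ed_def)

lemma Kn_wf: "kripke_wf (Kn n)"
  unfolding kripke_wf_def KnR' KnS using Rn_succ[of _ n] by (auto simp: Kn_def Rn_def)

lemma edge_lev: "(x,w) \<in> Rn n \<Longrightarrow> lev n x - 1 \<le> lev n w"
  unfolding KnR Ed_def lev_def by (auto split: if_splits; presburger)

lemma odd_succ_even: "(x,w) \<in> Rn n \<Longrightarrow> odd x \<Longrightarrow> even w"
  unfolding KnR Ed_def by (auto split: if_splits; presburger)

lemma no_edge1: "(x,1) \<notin> Rn n"
  unfolding KnR Ed_def by (auto split: if_splits; presburger)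

lemma self_loop: "even x \<Longrightarrow> x \<le> 2*n+3 \<Longrightarrow> (x,x) \<in> Rn n"
  unfolding KnR Ed_def by auto

lemma succ_choice:
  assumes "y \<le> 2*n+3" "1 \<le> lev n y" "even y \<or> b"
  shows "\<exists>z. (y,z) \<in> Rn n \<and> even z = b \<and> lev n y - 1 \<le> lev n z"
proof (cases "even y")
  case True
  show ?thesis
  proof (cases b)
    case True
    thus ?thesis using \<open>even y\<close> assms by (intro exI[of _ y]) (auto simp: self_loop)
  next
    case False
    have "y \<noteq> 2*n+3" using \<open>even y\<close> by presburger
    hence "2 \<le> y" using assms(2) \<open>even y\<close> unfolding lev_def by (auto split: if_splits)
    thus ?thesis using False \<open>even y\<close> assms unfolding KnR Ed_def lev_def
      by (intro exI[of _ "y+1"]) (auto; presburger)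
  qed
next
  case False
  hence b using assms by auto
  thus ?thesis using False assms unfolding KnR Ed_def lev_def
    by (intro exI[of _ "if y = 2*n+3 then y - 1 else y - 3"]) (auto; presburger)
qed

lemma reach_even_down: "j \<le> k \<Longrightarrow> k \<le> n+1 \<Longrightarrow> (2*k, 2*j) \<in> (Rn n)\<^sup>*"
proof (induction k)
  case 0 thus ?case by simp
next
  case (Suc k)
  show ?case
  proof (cases "j = Suc k")
    case True thus ?thesis by simp
  next
    case False
    hence "(2*k, 2*j) \<in> (Rn n)\<^sup>*" using Suc by auto
    moreover have "(2*Suc k, 2*k) \<in> Rn n" using Suc.prems unfolding KnR Ed_def by auto
    ultimately show ?thesis by (meson converse_rtrancl_into_rtrancl)
  qed
qed

lemma lev_even: "lev n (2*j) = j"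
  unfolding lev_def by presburger

lemma lev_odd: "2*j+1 \<noteq> 2*n+3 \<Longrightarrow> lev n (2*j+1) = j - 1"
  unfolding lev_def by presburger

lemma lev_top: "lev n (2*n+3) = n+1"
  unfolding lev_def by simp

lemma reach_low_even:
  assumes "1 \<le> k" "k \<le> n+1" "z \<le> 2*n+3" "z \<noteq> 1" "lev n z < k"
  shows "(2*k, z) \<in> (Rn n)\<^sup>*"
proof (cases "even z")
  case True
  then obtain j where j: "z = 2*j" by blast
  have "j < k" using assms(5) unfolding j lev_even .
  thus ?thesis using j assms(2) reach_even_down[of j k n] by simp
next
  case False
  then obtain j where j: "z = 2*j+1" by (metis oddE)
  have nt: "z \<noteq> 2*n+3"
  proof
    assume "z = 2*n+3" thus False using assms(2,5) lev_top[of n] by simp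
  qed
  have l: "lev n z = j - 1" using nt lev_odd[of j n] j by simp
  have "1 \<le> j" using assms(4) j by simp
  hence jk: "j \<le> k" using assms(5) l by simp
  hence "(2*k, 2*j) \<in> (Rn n)\<^sup>*" using assms(2) reach_even_down[of j k n] by simp
  moreover have "(2*j, z) \<in> Rn n" using j jk \<open>1 \<le> j\<close> assms(2) unfolding KnR Ed_def by simp
  ultimately show ?thesis by (meson rtrancl_into_rtrancl)
qed

lemma reach_low:
  assumes "y \<le> 2*n+3" "1 \<le> lev n y" "z \<le> 2*n+3" "z \<noteq> 1" "lev n z < lev n y"
  shows "(y, z) \<in> (Rn n)\<^sup>*"
proof (cases "even y")
  case True
  then obtain k where k: "y = 2*k" by blast
  have l: "lev n y = k" using k lev_even by simp
  have "k \<le> n+1" using assms(1) k by simp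
  thus ?thesis using reach_low_even[of k n z] assms k l by simp
next
  case False
  then obtain i where i: "y = 2*i+1" by (metis oddE)
  show ?thesis
  proof (cases "y = 2*n+3")
    case True
    have e: "(y, 2*(n+1)) \<in> Rn n" using True unfolding KnR Ed_def by simp
    have "(2*(n+1), z) \<in> (Rn n)\<^sup>*" using reach_low_even[of "n+1" n z] assms True lev_top[of n] by simp
    thus ?thesis using e by (meson converse_rtrancl_into_rtrancl)
  next
    case nt: False
    have l: "lev n y = i - 1" using nt lev_odd[of i n] i by simp
    hence i2: "2 \<le> i" using assms(2) by simp
    have "i \<le> n" using assms(1) nt i by simp
    have e: "(y, 2*(i-1)) \<in> Rn n" using nt i i2 assms(1) unfolding KnR Ed_def by (simp; linarith)
    have "(2*(i-1), z) \<in> (Rn n)\<^sup>*" using reach_low_even[of "i-1" n z] assms l i2 \<open>i \<le> n\<close> by simp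
    thus ?thesis using e by (meson converse_rtrancl_into_rtrancl)
  qed
qed

lemma reach_not1: "(x,w) \<in> (Rn n)\<^sup>* \<Longrightarrow> x \<noteq> 1 \<Longrightarrow> w \<noteq> 1"
  by (erule rtranclE) (use no_edge1[of _ n] in auto)

lemma reach_bound: "(x,w) \<in> (Rn n)\<^sup>* \<Longrightarrow> x \<le> 2*n+3 \<Longrightarrow> w \<le> 2*n+3"
  by (erule rtranclE) (auto simp: KnR)

lemma path_in_S:
  assumes "kripke_wf K" "\<pi> \<in> kpaths K s" "s \<in> kS K"
  shows "\<pi> i \<in> kS K"
proof (cases i)
  case 0 thus ?thesis using assms by (simp add: kpaths_def)
next
  case (Suc j)
  have "(\<pi> j, \<pi> (Suc j)) \<in> kR K" using assms by (simp add: kpaths_def)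
  thus ?thesis using assms(1) Suc unfolding kripke_wf_def by blast
qed

lemma kpath_exists:
  assumes wf: "kripke_wf K" and s: "s \<in> kS K"
  shows "\<exists>\<pi>. \<pi> \<in> kpaths K s"
proof -
  define \<pi> where "\<pi> = rec_nat s (\<lambda>_ x. SOME y. (x,y) \<in> kR K)"
  have suc: "\<pi> (Suc i) = (SOME y. (\<pi> i, y) \<in> kR K)" for i by (simp add: \<pi>_def)
  have S: "\<pi> i \<in> kS K \<and> (\<pi> i, \<pi> (Suc i)) \<in> kR K" for i
  proof (induction i)
    case 0
    have "\<pi> 0 = s" by (simp add: \<pi>_def)
    moreover have "\<exists>y. (s,y) \<in> kR K" using wf s unfolding kripke_wf_def by blast
    ultimately show ?case using s suc[of 0] by (metis someI_ex)
  next
    case (Suc i)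
    hence a: "\<pi> (Suc i) \<in> kS K" using wf unfolding kripke_wf_def by blast
    moreover have "\<exists>y. (\<pi> (Suc i),y) \<in> kR K" using wf a unfolding kripke_wf_def by blast
    ultimately show ?case using suc[of "Suc i"] by (metis someI_ex)
  qed
  have "\<pi> 0 = s" by (simp add: \<pi>_def)
  thus ?thesis using S unfolding kpaths_def by blast
qed

lemma cons_path:
  assumes "(y,z) \<in> kR K" "\<rho> \<in> kpaths K z"
  shows "(\<lambda>i. case i of 0 \<Rightarrow> y | Suc j \<Rightarrow> \<rho> j) \<in> kpaths K y"
  using assms unfolding kpaths_def by (auto split: nat.split)

lemma reach_path:
  assumes wf: "kripke_wf K" and r: "(y,w) \<in> (kR K)\<^sup>*" and y: "y \<in> kS K"
  shows "\<exists>\<pi>\<in>kpaths K y. \<exists>j. \<pi> j = w"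
  using r y
proof (induction rule: converse_rtrancl_induct)
  case base
  then obtain \<pi> where "\<pi> \<in> kpaths K w" using kpath_exists[OF wf] by blast
  thus ?case by (auto simp: kpaths_def)
next
  case (step y z)
  hence "z \<in> kS K" using wf unfolding kripke_wf_def by blast
  then obtain \<rho> j where \<rho>: "\<rho> \<in> kpaths K z" "\<rho> j = w" using step by blast
  show ?case using cons_path[OF step(1) \<rho>(1)] \<rho>(2) by (intro bexI[of _ "(\<lambda>i. case i of 0 \<Rightarrow> y | Suc j \<Rightarrow> \<rho> j)"] exI[of _ "Suc j"]) auto
qed

lemma path_reach: "\<pi> \<in> kpaths K x \<Longrightarrow> (x, \<pi> j) \<in> (kR K)\<^sup>*"
proof (induction j)
  case 0 thus ?case by (simp add: kpaths_def)
next
  case (Suc j)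
  have "(\<pi> j, \<pi> (Suc j)) \<in> kR K" using Suc.prems by (simp add: kpaths_def)
  with Suc.IH[OF Suc.prems] show ?case by (rule rtrancl_into_rtrancl)
qed

lemma cdelta_edge:
  assumes wf: "kripke_wf K" and x: "x \<in> kS K"
  shows "(x, cdelta (cgs_of K) x v) \<in> kR K"
proof -
  have "\<exists>y. (x,y) \<in> kR K" using wf x unfolding kripke_wf_def by blast
  hence "(x, SOME y. (x,y) \<in> kR K) \<in> kR K" by (rule someI_ex)
  thus ?thesis unfolding cgs_of_def by simp
qed

lemma out_kpaths:
  assumes wf: "kripke_wf K" and s: "s \<in> kS K" and p: "\<pi> \<in> out (cgs_of K) s A F"
  shows "\<pi> \<in> kpaths K s"
proof -
  have st: "\<exists>v. \<pi> (Suc n) = cdelta (cgs_of K) (\<pi> n) v" for n using p unfolding out_def by blast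
  have S: "\<pi> i \<in> kS K \<and> (\<pi> i, \<pi> (Suc i)) \<in> kR K" for i
  proof (induction i)
    case 0
    have "\<pi> 0 = s" using p by (simp add: out_def)
    thus ?case using s st[of 0] cdelta_edge[OF wf] by metis
  next
    case (Suc i)
    hence a: "\<pi> (Suc i) \<in> kS K" using wf unfolding kripke_wf_def by blast
    thus ?case using st[of "Suc i"] cdelta_edge[OF wf] by metis
  qed
  thus ?thesis using p by (simp add: kpaths_def out_def)
qed

lemma kpaths_out:
  assumes wf: "kripke_wf K" and A: "0 \<notin> A" and p: "\<pi> \<in> kpaths K s"
  shows "\<pi> \<in> out (cgs_of K) s A F"
  unfolding out_def
proof (intro CollectI conjI allI)
  show "\<pi> 0 = s" using p by (simp add: kpaths_def)
  fix n
  let ?v = "\<lambda>a::nat. if a = 0 then \<pi> (Suc n) else undefined"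
  have e: "(\<pi> n, \<pi> (Suc n)) \<in> kR K" using p by (simp add: kpaths_def)
  hence "\<pi> (Suc n) \<in> kS K" using wf unfolding kripke_wf_def by blast
  hence "?v \<in> AV (cgs_of K)" by (auto simp: AV_def cgs_of_def PiE_def extensional_def)
  moreover have "\<forall>a\<in>A \<inter> cAg (cgs_of K). ?v a = F a (hist \<pi> n)" using A by (simp add: cgs_of_def)
  moreover have "\<pi> (Suc n) = cdelta (cgs_of K) (\<pi> n) ?v" using e by (simp add: cgs_of_def)
  ultimately show "\<exists>v\<in>AV (cgs_of K). (\<forall>a\<in>A \<inter> cAg (cgs_of K). v a = F a (hist \<pi> n)) \<and>
       \<pi> (Suc n) = cdelta (cgs_of K) (\<pi> n) v" by (intro bexI[of _ ?v] conjI) auto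
qed

lemma strat_path:
  assumes wf: "kripke_wf K" and s: "s \<in> kS K" and p: "\<pi> \<in> kpaths K s" and A: "0 \<in> A"
  shows "strats (cgs_of K) A (\<lambda>a h. \<pi> (length h))"
    and "\<rho> \<in> out (cgs_of K) s A (\<lambda>a h. \<pi> (length h)) \<Longrightarrow> \<rho> = \<pi>"
proof -
  show "strats (cgs_of K) A (\<lambda>a h. \<pi> (length h))"
    using path_in_S[OF wf p s] by (simp add: strats_def cgs_of_def)
next
  assume r: "\<rho> \<in> out (cgs_of K) s A (\<lambda>a h. \<pi> (length h))"
  have "\<rho> n = \<pi> n" for n
  proof (induction n)
    case 0 thus ?case using r p by (simp add: out_def kpaths_def)
  next
    case (Suc n)
    obtain v where v: "v \<in> AV (cgs_of K)" "\<forall>a\<in>A \<inter> cAg (cgs_of K). v a = \<pi> (length (hist \<rho> n))"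
      "\<rho> (Suc n) = cdelta (cgs_of K) (\<rho> n) v" using r unfolding out_def by blast
    have "v 0 = \<pi> (Suc n)" using v(2) A by (simp add: cgs_of_def hist_def)
    moreover have "(\<pi> n, \<pi> (Suc n)) \<in> kR K" using p by (simp add: kpaths_def)
    ultimately show ?case using v(3) Suc by (simp add: cgs_of_def)
  qed
  thus "\<rho> = \<pi>" by auto
qed

primrec pref :: "'p kripke \<Rightarrow> (nat \<Rightarrow> nat list \<Rightarrow> nat) \<Rightarrow> nat \<Rightarrow> nat \<Rightarrow> nat list" where
  "pref K F s 0 = [s]"
| "pref K F s (Suc n) = pref K F s n @
     [cdelta (cgs_of K) (last (pref K F s n)) (\<lambda>b. if b = 0 then F 0 (pref K F s n) else undefined)]"

lemma pref_len: "length (pref K F s n) = Suc n" by (induction n) auto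

lemma pref_nth: "i \<le> n \<Longrightarrow> pref K F s n ! i = last (pref K F s i)"
proof (induction n)
  case 0 thus ?case by simp
next
  case (Suc n)
  show ?case
  proof (cases "i = Suc n")
    case True thus ?thesis using pref_len[of K F s n] by (simp add: nth_append)
  next
    case False
    hence "i \<le> n" using Suc by auto
    thus ?thesis using Suc pref_len[of K F s n] by (simp add: nth_append)
  qed
qed

lemma hist_pref: "hist (\<lambda>i. last (pref K F s i)) n = pref K F s n"
  by (rule nth_equalityI) (auto simp: hist_def pref_len pref_nth simp del: upt_Suc)

lemma out_ne:
  assumes wf: "kripke_wf K" and A: "0 \<in> A" and st: "strats (cgs_of K) A F"
  shows "\<exists>\<rho>. \<rho> \<in> out (cgs_of K) s A F"
proof -
  let ?\<rho> = "\<lambda>i. last (pref K F s i)"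
  have "?\<rho> \<in> out (cgs_of K) s A F"
    unfolding out_def
  proof (intro CollectI conjI allI)
    show "?\<rho> 0 = s" by simp
    fix n
    let ?v = "\<lambda>b::nat. if b = 0 then F 0 (pref K F s n) else undefined"
    have "F 0 (pref K F s n) \<in> kS K" using st A by (simp add: strats_def cgs_of_def)
    hence "?v \<in> AV (cgs_of K)" by (auto simp: AV_def cgs_of_def PiE_def extensional_def)
    moreover have "\<forall>a\<in>A \<inter> cAg (cgs_of K). ?v a = F a (hist ?\<rho> n)"
      by (simp add: cgs_of_def hist_pref)
    moreover have "?\<rho> (Suc n) = cdelta (cgs_of K) (?\<rho> n) ?v" by simp
    ultimately show "\<exists>v\<in>AV (cgs_of K). (\<forall>a\<in>A \<inter> cAg (cgs_of K). v a = F a (hist ?\<rho> n)) \<and>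
       ?\<rho> (Suc n) = cdelta (cgs_of K) (?\<rho> n) v" by (intro bexI[of _ ?v] conjI) auto
  qed
  thus ?thesis by blast
qed

lemma coal_red:
  assumes wf: "kripke_wf K" and s: "s \<in> kS K"
  shows "(\<exists>F. strats (cgs_of K) A F \<and> (\<forall>\<pi>\<in>out (cgs_of K) s A F. Q \<pi>)) \<longleftrightarrow>
         (if 0 \<in> A then (\<exists>\<pi>\<in>kpaths K s. Q \<pi>) else (\<forall>\<pi>\<in>kpaths K s. Q \<pi>))"
proof (cases "0 \<in> A")
  case True
  show ?thesis
  proof
    assume "\<exists>F. strats (cgs_of K) A F \<and> (\<forall>\<pi>\<in>out (cgs_of K) s A F. Q \<pi>)"
    then obtain F where F: "strats (cgs_of K) A F" "\<forall>\<pi>\<in>out (cgs_of K) s A F. Q \<pi>" by blast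
    obtain \<rho> where "\<rho> \<in> out (cgs_of K) s A F" using out_ne[OF wf True F(1)] by blast
    thus "if 0 \<in> A then (\<exists>\<pi>\<in>kpaths K s. Q \<pi>) else (\<forall>\<pi>\<in>kpaths K s. Q \<pi>)"
      using True F(2) out_kpaths[OF wf s] by auto
  next
    assume "if 0 \<in> A then (\<exists>\<pi>\<in>kpaths K s. Q \<pi>) else (\<forall>\<pi>\<in>kpaths K s. Q \<pi>)"
    then obtain \<pi> where p: "\<pi> \<in> kpaths K s" "Q \<pi>" using True by auto
    show "\<exists>F. strats (cgs_of K) A F \<and> (\<forall>\<pi>\<in>out (cgs_of K) s A F. Q \<pi>)"
      using strat_path[OF wf s p(1) True] p(2) by blast
  qed
next
  case False
  have "strats (cgs_of K) A F" for F using False by (auto simp: strats_def cgs_of_def)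
  moreover have "out (cgs_of K) s A F = kpaths K s" for F
    using out_kpaths[OF wf s] kpaths_out[OF wf False] by blast
  ultimately show ?thesis using False by auto
qed

lemma dual_red:
  assumes wf: "kripke_wf K" and s: "s \<in> kS K"
  shows "(\<forall>F. strats (cgs_of K) A F \<longrightarrow> (\<exists>\<pi>\<in>out (cgs_of K) s A F. Q \<pi>)) \<longleftrightarrow>
         (if 0 \<in> A then (\<forall>\<pi>\<in>kpaths K s. Q \<pi>) else (\<exists>\<pi>\<in>kpaths K s. Q \<pi>))"
proof (cases "0 \<in> A")
  case True
  show ?thesis
  proof
    assume h: "\<forall>F. strats (cgs_of K) A F \<longrightarrow> (\<exists>\<pi>\<in>out (cgs_of K) s A F. Q \<pi>)"
    have "Q \<pi>" if p: "\<pi> \<in> kpaths K s" for \<pi>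
      using h strat_path[OF wf s p True] by metis
    thus "if 0 \<in> A then (\<forall>\<pi>\<in>kpaths K s. Q \<pi>) else (\<exists>\<pi>\<in>kpaths K s. Q \<pi>)" using True by auto
  next
    assume "if 0 \<in> A then (\<forall>\<pi>\<in>kpaths K s. Q \<pi>) else (\<exists>\<pi>\<in>kpaths K s. Q \<pi>)"
    hence h: "\<forall>\<pi>\<in>kpaths K s. Q \<pi>" using True by auto
    show "\<forall>F. strats (cgs_of K) A F \<longrightarrow> (\<exists>\<pi>\<in>out (cgs_of K) s A F. Q \<pi>)"
    proof (intro allI impI)
      fix F assume "strats (cgs_of K) A F"
      then obtain \<rho> where "\<rho> \<in> out (cgs_of K) s A F" using out_ne[OF wf True] by blast
      thus "\<exists>\<pi>\<in>out (cgs_of K) s A F. Q \<pi>" using h out_kpaths[OF wf s] by blast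
    qed
  qed
next
  case False
  have "strats (cgs_of K) A F" for F using False by (auto simp: strats_def cgs_of_def)
  moreover have "out (cgs_of K) s A F = kpaths K s" for F
    using out_kpaths[OF wf s] kpaths_out[OF wf False] by blast
  ultimately show ?thesis using False by auto
qed



section \<open>Transfer in Kn\<close>

definition PR :: "nat \<Rightarrow> nat \<Rightarrow> (nat \<Rightarrow> nat) set" where
  "PR n s = {\<pi>. \<pi> 0 = s \<and> (\<forall>i. (\<pi> i, \<pi> (Suc i)) \<in> Rn n)}"

lemma PR_eq: "kpaths (Kn n) s = PR n s"
  unfolding kpaths_def PR_def KnR' by (rule refl)

lemma PR_reach: "(y,w) \<in> (Rn n)\<^sup>* \<Longrightarrow> y \<le> 2*n+3 \<Longrightarrow> \<exists>\<pi>\<in>PR n y. \<exists>j. \<pi> j = w"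
proof -
  assume a: "(y,w) \<in> (Rn n)\<^sup>*" "y \<le> 2*n+3"
  have s: "y \<in> kS (Kn n :: unit kripke)" using a by (simp add: KnS)
  have r: "(y,w) \<in> (kR (Kn n :: unit kripke))\<^sup>*" using a by (simp add: KnR')
  have "\<exists>\<pi>\<in>kpaths (Kn n :: unit kripke) y. \<exists>j. \<pi> j = w" by (rule reach_path[OF Kn_wf r s])
  thus ?thesis by (simp only: PR_eq)
qed

lemma PR_ex: "x \<le> 2*n+3 \<Longrightarrow> \<exists>\<pi>. \<pi> \<in> PR n x"
  using PR_reach[of x x n] by blast

lemma PR_cons: "(y,z) \<in> Rn n \<Longrightarrow> \<rho> \<in> PR n z \<Longrightarrow> (\<lambda>i. case i of 0 \<Rightarrow> y | Suc j \<Rightarrow> \<rho> j) \<in> PR n y"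
  unfolding PR_def by (auto split: nat.split)

lemma PR_reach2: "\<pi> \<in> PR n x \<Longrightarrow> (x, \<pi> j) \<in> (Rn n)\<^sup>*"
proof -
  assume "\<pi> \<in> PR n x"
  hence "\<pi> \<in> kpaths (Kn n :: unit kripke) x" unfolding PR_eq .
  from path_reach[OF this, of j] show ?thesis unfolding KnR' .
qed

lemma PR_const: "even x \<Longrightarrow> x \<le> 2*n+3 \<Longrightarrow> (\<lambda>_. x) \<in> PR n x"
  unfolding PR_def using self_loop by auto

definition rel :: "nat \<Rightarrow> nat \<Rightarrow> nat \<Rightarrow> nat \<Rightarrow> bool" where
  "rel n d x y \<longleftrightarrow> x \<le> 2*n+3 \<and> y \<le> 2*n+3 \<and> (x = y \<or> (even x = even y \<and> d \<le> lev n x \<and> d \<le> lev n y))"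

lemma rel_sym: "rel n d x y \<Longrightarrow> rel n d y x" unfolding rel_def by auto
lemma rel_mono: "rel n d x y \<Longrightarrow> d' \<le> d \<Longrightarrow> rel n d' x y" unfolding rel_def by auto

lemma succ_match:
  assumes r: "rel n d x y" and d: "1 \<le> d" and e: "(x,w) \<in> Rn n"
  shows "\<exists>w'. (y,w') \<in> Rn n \<and> rel n (d-1) w w'"
proof (cases "x = y")
  case True thus ?thesis using e by (intro exI[of _ w]) (auto simp: rel_def KnR)
next
  case False
  hence r': "even x = even y" "d \<le> lev n x" "d \<le> lev n y" "y \<le> 2*n+3" using r by (auto simp: rel_def)
  have lw: "d - 1 \<le> lev n w" using edge_lev[OF e] r' by linarith
  have "even y \<or> even w" using odd_succ_even[OF e] r' by auto
  then obtain z where z: "(y,z) \<in> Rn n" "even z = even w" "lev n y - 1 \<le> lev n z"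
    using succ_choice[of y n "even w"] r' d by auto
  have "rel n (d-1) w z" using z lw r' e unfolding rel_def KnR by auto
  thus ?thesis using z by blast
qed

lemma lev1: "lev n 1 = 0" unfolding lev_def by auto

lemma reach_match:
  assumes r: "rel n d x y" and d: "1 \<le> d" and e: "(x,w) \<in> (Rn n)\<^sup>*"
  shows "\<exists>w'. (y,w') \<in> (Rn n)\<^sup>* \<and> rel n (d-1) w w'"
proof (cases "x = y")
  case True thus ?thesis using e r reach_bound[OF e] by (intro exI[of _ w]) (auto simp: rel_def)
next
  case False
  hence r': "even x = even y" "d \<le> lev n x" "d \<le> lev n y" "y \<le> 2*n+3" "x \<le> 2*n+3"
    using r by (auto simp: rel_def)
  have x1: "x \<noteq> 1" using r' d lev1[of n] by auto
  have w1: "w \<noteq> 1" using reach_not1[OF e x1] .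
  have wb: "w \<le> 2*n+3" using reach_bound[OF e r'(5)] .
  show ?thesis
  proof (cases "lev n w < lev n y")
    case True
    thus ?thesis using reach_low[OF r'(4) _ wb w1 True] r' d wb by (intro exI[of _ w]) (auto simp: rel_def)
  next
    case lw: False
    show ?thesis
    proof (cases "even w = even y")
      case True
      thus ?thesis using lw r' wb by (intro exI[of _ y]) (auto simp: rel_def)
    next
      case False
      have "even y \<or> even w" using False by auto
      then obtain z where z: "(y,z) \<in> Rn n" "even z = even w" "lev n y - 1 \<le> lev n z"
        using succ_choice[of y n "even w"] r' d by auto
      have "rel n (d-1) w z" using z lw r' wb unfolding rel_def KnR by auto
      thus ?thesis using z by blast
    qed
  qed
qed

definition resp :: "nat \<Rightarrow> nat \<Rightarrow> (nat \<Rightarrow> bool) \<Rightarrow> bool" where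
  "resp n d P \<longleftrightarrow> (\<forall>w w'. rel n d w w' \<longrightarrow> (P w \<longleftrightarrow> P w'))"

lemma transfer_E1:
  assumes r: "rel n d x y" and d: "1 \<le> d" and P: "resp n (d-1) P"
    and p: "\<pi> \<in> PR n x" and h: "holds_path T P \<pi>"
  shows "\<exists>\<pi>'\<in>PR n y. holds_path T P \<pi>'"
proof (cases "x = y")
  case True thus ?thesis using p h by blast
next
  case xy: False
  have yb: "y \<le> 2*n+3" using r by (simp add: rel_def)
  have p0: "\<pi> 0 = x" and pe: "\<And>i. (\<pi> i, \<pi> (Suc i)) \<in> Rn n" using p by (auto simp: PR_def)
  show ?thesis
  proof (cases T)
    case Nxt
    have e: "(x, \<pi> 1) \<in> Rn n" using pe[of 0] p0 by simp
    obtain w' where w': "(y,w') \<in> Rn n" "rel n (d-1) (\<pi> 1) w'" using succ_match[OF r d e] by blast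
    have "w' \<le> 2*n+3" using w' by (simp add: KnR)
    then obtain \<rho> where \<rho>: "\<rho> \<in> PR n w'" using PR_ex by blast
    have "\<rho> 0 = w'" using \<rho> by (simp add: PR_def)
    moreover have "P w'" using h Nxt w'(2) P by (simp add: resp_def)
    ultimately show ?thesis using PR_cons[OF w'(1) \<rho>] Nxt
      by (intro bexI[of _ "(\<lambda>i. case i of 0 \<Rightarrow> y | Suc j \<Rightarrow> \<rho> j)"]) auto
  next
    case Evt
    then obtain j where j: "P (\<pi> j)" using h by auto
    have e: "(x, \<pi> j) \<in> (Rn n)\<^sup>*" using PR_reach2[OF p] .
    obtain w' where w': "(y,w') \<in> (Rn n)\<^sup>*" "rel n (d-1) (\<pi> j) w'" using reach_match[OF r d e] by blast
    obtain \<pi>' j' where \<pi>': "\<pi>' \<in> PR n y" "\<pi>' j' = w'" using PR_reach[OF w'(1) yb] by blast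
    have "P w'" using j w'(2) P by (simp add: resp_def)
    thus ?thesis using \<pi>' Evt by auto
  next
    case Alw
    hence all: "\<And>i. P (\<pi> i)" using h by auto
    have "rel n (d-1) x y" using rel_mono[OF r] by auto
    hence Py: "P y" using all[of 0] p0 P by (simp add: resp_def)
    show ?thesis
    proof (cases "even y")
      case True
      thus ?thesis using PR_const[OF True yb] Py Alw by (intro bexI[of _ "\<lambda>_. y"]) auto
    next
      case False
      hence ox: "odd x" using r xy by (auto simp: rel_def)
      have e: "(x, \<pi> 1) \<in> Rn n" using pe[of 0] p0 by simp
      obtain w' where w': "(y,w') \<in> Rn n" "rel n (d-1) (\<pi> 1) w'" using succ_match[OF r d e] by blast
      have "even (\<pi> 1)" using odd_succ_even[OF e ox] .
      hence ew: "even w'" using w'(2) by (auto simp: rel_def)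
      have wb: "w' \<le> 2*n+3" using w' by (simp add: KnR)
      have Pw: "P w'" using all[of 1] w'(2) P by (simp add: resp_def)
      have "(\<lambda>i. case i of 0 \<Rightarrow> y | Suc j \<Rightarrow> w') \<in> PR n y"
        using PR_cons[OF w'(1) PR_const[OF ew wb]] by simp
      moreover have "\<forall>i. P (case i of 0 \<Rightarrow> y | Suc j \<Rightarrow> w')" using Py Pw by (auto split: nat.split)
      ultimately show ?thesis using Alw by (intro bexI[of _ "(\<lambda>i. case i of 0 \<Rightarrow> y | Suc j \<Rightarrow> w')"]) auto
    qed
  qed
qed

fun dT :: "temp \<Rightarrow> temp" where
  "dT Nxt = Nxt" | "dT Evt = Alw" | "dT Alw = Evt"

lemma holds_dual: "(\<forall>\<pi>\<in>X. holds_path T P \<pi>) \<longleftrightarrow> \<not> (\<exists>\<pi>\<in>X. holds_path (dT T) (\<lambda>w. \<not> P w) \<pi>)"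
  by (cases T) auto

lemma resp_neg: "resp n d P \<Longrightarrow> resp n d (\<lambda>w. \<not> P w)" unfolding resp_def by blast

lemma transfer_E:
  assumes r: "rel n d x y" and d: "1 \<le> d" and P: "resp n (d-1) P"
  shows "(\<exists>\<pi>\<in>PR n x. holds_path T P \<pi>) \<longleftrightarrow> (\<exists>\<pi>\<in>PR n y. holds_path T P \<pi>)"
  using transfer_E1[OF r d P] transfer_E1[OF rel_sym[OF r] d P] by blast

lemma transfer_A:
  assumes r: "rel n d x y" and d: "1 \<le> d" and P: "resp n (d-1) P"
  shows "(\<forall>\<pi>\<in>PR n x. holds_path T P \<pi>) \<longleftrightarrow> (\<forall>\<pi>\<in>PR n y. holds_path T P \<pi>)"
  unfolding holds_dual using transfer_E[OF r d resp_neg[OF P]] by blast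

section \<open>Agreement\<close>

fun depth :: "'p atl \<Rightarrow> nat" where
  "depth (AProp p) = 0"
| "depth (ANeg \<phi>) = depth \<phi>"
| "depth (AOr \<phi> \<psi>) = max (depth \<phi>) (depth \<psi>)"
| "depth (AAnd \<phi> \<psi>) = max (depth \<phi>) (depth \<psi>)"
| "depth (AImp \<phi> \<psi>) = max (depth \<phi>) (depth \<psi>)"
| "depth (ACoal A T \<phi>) = Suc (depth \<phi>)"
| "depth (ADual A T \<phi>) = Suc (depth \<phi>)"

lemma rel_S: "rel n d x y \<Longrightarrow> x \<in> kS (Kn n) \<and> y \<in> kS (Kn n)"
  unfolding rel_def KnS by simp

lemma coal_red_Kn:
  assumes "s \<in> kS (Kn n :: 'p kripke)"
  shows "(\<exists>F. strats (cgs_of (Kn n :: 'p kripke)) A F \<and> (\<forall>\<pi>\<in>out (cgs_of (Kn n :: 'p kripke)) s A F. Q \<pi>)) \<longleftrightarrow>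
         (if 0 \<in> A then (\<exists>\<pi>\<in>PR n s. Q \<pi>) else (\<forall>\<pi>\<in>PR n s. Q \<pi>))"
  using coal_red[OF Kn_wf assms, of A Q] unfolding PR_eq .

lemma dual_red_Kn:
  assumes "s \<in> kS (Kn n :: 'p kripke)"
  shows "(\<forall>F. strats (cgs_of (Kn n :: 'p kripke)) A F \<longrightarrow> (\<exists>\<pi>\<in>out (cgs_of (Kn n :: 'p kripke)) s A F. Q \<pi>)) \<longleftrightarrow>
         (if 0 \<in> A then (\<forall>\<pi>\<in>PR n s. Q \<pi>) else (\<exists>\<pi>\<in>PR n s. Q \<pi>))"
  using dual_red[OF Kn_wf assms, of A Q] unfolding PR_eq .

lemma agree:
  "\<forall>d x y. depth \<psi> \<le> d \<longrightarrow> rel n d x y \<longrightarrow>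
     (atl_sat (cgs_of (Kn n)) x \<psi> \<longleftrightarrow> atl_sat (cgs_of (Kn n)) y \<psi>)"
proof (induction \<psi>)
  case (AProp p)
  show ?case by (auto simp: rel_def cgs_of_def Kn_def)
next
  case (ANeg \<phi>) thus ?case by simp
next
  case (AOr \<phi>1 \<phi>2) thus ?case by (simp; blast)
next
  case (AAnd \<phi>1 \<phi>2) thus ?case by (simp; blast)
next
  case (AImp \<phi>1 \<phi>2) thus ?case by (simp; blast)
next
  case (ACoal A T \<phi>)
  show ?case
  proof (intro allI impI)
    fix d x y
    assume dd: "depth (ACoal A T \<phi>) \<le> d" and r: "rel n d x y"
    let ?Q = "\<lambda>t. atl_sat (cgs_of (Kn n)) t \<phi>"
    have d1: "1 \<le> d" using dd by simp
    have dp: "depth \<phi> \<le> d - 1" using dd by simp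
    have P: "resp n (d-1) ?Q" unfolding resp_def
    proof (intro allI impI)
      fix w w' assume "rel n (d-1) w w'"
      thus "?Q w = ?Q w'" using ACoal.IH dp by blast
    qed
    have xS: "x \<in> kS (Kn n)" and yS: "y \<in> kS (Kn n)" using rel_S[OF r] by auto
    have ex: "atl_sat (cgs_of (Kn n)) x (ACoal A T \<phi>) =
        (if 0 \<in> A then (\<exists>\<pi>\<in>PR n x. holds_path T ?Q \<pi>) else (\<forall>\<pi>\<in>PR n x. holds_path T ?Q \<pi>))"
      unfolding atl_sat.simps by (rule coal_red_Kn[OF xS])
    have ey: "atl_sat (cgs_of (Kn n)) y (ACoal A T \<phi>) =
        (if 0 \<in> A then (\<exists>\<pi>\<in>PR n y. holds_path T ?Q \<pi>) else (\<forall>\<pi>\<in>PR n y. holds_path T ?Q \<pi>))"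
      unfolding atl_sat.simps by (rule coal_red_Kn[OF yS])
    show "atl_sat (cgs_of (Kn n)) x (ACoal A T \<phi>) = atl_sat (cgs_of (Kn n)) y (ACoal A T \<phi>)"
      unfolding ex ey using transfer_E[OF r d1 P, of T] transfer_A[OF r d1 P, of T] by simp
  qed
next
  case (ADual A T \<phi>)
  show ?case
  proof (intro allI impI)
    fix d x y
    assume dd: "depth (ADual A T \<phi>) \<le> d" and r: "rel n d x y"
    let ?Q = "\<lambda>t. atl_sat (cgs_of (Kn n)) t \<phi>"
    have d1: "1 \<le> d" using dd by simp
    have dp: "depth \<phi> \<le> d - 1" using dd by simp
    have P: "resp n (d-1) ?Q" unfolding resp_def
    proof (intro allI impI)
      fix w w' assume "rel n (d-1) w w'"
      thus "?Q w = ?Q w'" using ADual.IH dp by blast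
    qed
    have xS: "x \<in> kS (Kn n)" and yS: "y \<in> kS (Kn n)" using rel_S[OF r] by auto
    have ex: "atl_sat (cgs_of (Kn n)) x (ADual A T \<phi>) =
        (if 0 \<in> A then (\<forall>\<pi>\<in>PR n x. holds_path T ?Q \<pi>) else (\<exists>\<pi>\<in>PR n x. holds_path T ?Q \<pi>))"
      unfolding atl_sat.simps by (rule dual_red_Kn[OF xS])
    have ey: "atl_sat (cgs_of (Kn n)) y (ADual A T \<phi>) =
        (if 0 \<in> A then (\<forall>\<pi>\<in>PR n y. holds_path T ?Q \<pi>) else (\<exists>\<pi>\<in>PR n y. holds_path T ?Q \<pi>))"
      unfolding atl_sat.simps by (rule dual_red_Kn[OF yS])
    show "atl_sat (cgs_of (Kn n)) x (ADual A T \<phi>) = atl_sat (cgs_of (Kn n)) y (ADual A T \<phi>)"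
      unfolding ex ey using transfer_E[OF r d1 P, of T] transfer_A[OF r d1 P, of T] by simp
  qed
qed

section \<open>rCTL side\<close>

lemma vals:
  assumes "g \<longrightarrow> fg" "fg \<longrightarrow> gf" "gf \<longrightarrow> f"
  shows "[g,fg,gf,f] \<in> B4 \<and> (b4_le b0011 [g,fg,gf,f] \<longleftrightarrow> gf)"
  using assms by (cases g; cases fg; cases gf; cases f)
    (auto simp: B4_def b4_le_def b4_rank_def b1111_def b0111_def b0011_def b0001_def b0000_def)

lemma rank_inj: "b \<in> B4 \<Longrightarrow> c \<in> B4 \<Longrightarrow> b4_rank b = b4_rank c \<Longrightarrow> b = c"
  by (auto simp: B4_def b4_rank_def b1111_def b0111_def b0011_def b0001_def b0000_def)

lemma b4max:
  assumes X: "X \<subseteq> B4" "X \<noteq> {}"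
  shows "b4_Max X \<in> X \<and> (\<forall>c\<in>X. b4_le c (b4_Max X))"
proof -
  have fin: "finite X" using X(1) finite_subset[of X B4] by (simp add: B4_def)
  have "Max (b4_rank ` X) \<in> b4_rank ` X" using fin X(2) by simp
  then obtain b where b: "b \<in> X" "b4_rank b = Max (b4_rank ` X)" by auto
  have bm: "\<forall>c\<in>X. b4_le c b" using b fin by (simp add: b4_le_def)
  have "b4_Max X = b" unfolding b4_Max_def
  proof (rule the_equality)
    show "b \<in> X \<and> (\<forall>c\<in>X. b4_le c b)" using b bm by simp
  next
    fix b' assume h: "b' \<in> X \<and> (\<forall>c\<in>X. b4_le c b')"
    hence "b4_rank b' = b4_rank b" using bm b(1) unfolding b4_le_def by (meson le_antisym)
    thus "b' = b" using rank_inj h b(1) X(1) by blast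
  qed
  thus ?thesis using b bm by simp
qed

lemma bitf: "k \<in> {1,2,3,4} \<Longrightarrow> bit (if c then b1111 else b0000) k = c"
  by (auto simp: bit_def b1111_def b0000_def)

lemma seq_imps:
  fixes o' :: "nat \<Rightarrow> bool"
  shows "(\<forall>i. o' i) \<longrightarrow> (\<exists>i. \<forall>j\<ge>i. o' j)"
    and "(\<exists>i. \<forall>j\<ge>i. o' j) \<longrightarrow> (\<forall>i. \<exists>j\<ge>i. o' j)"
    and "(\<forall>i. \<exists>j\<ge>i. o' j) \<longrightarrow> (\<exists>i. o' i)"
proof -
  show "(\<forall>i. o' i) \<longrightarrow> (\<exists>i. \<forall>j\<ge>i. o' j)" by blast
  show "(\<exists>i. \<forall>j\<ge>i. o' j) \<longrightarrow> (\<forall>i. \<exists>j\<ge>i. o' j)"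
  proof (intro impI allI)
    fix i assume "\<exists>i. \<forall>j\<ge>i. o' j"
    then obtain i0 where "\<forall>j\<ge>i0. o' j" by blast
    thus "\<exists>j\<ge>i. o' j" by (intro exI[of _ "max i i0"]) auto
  qed
  show "(\<forall>i. \<exists>j\<ge>i. o' j) \<longrightarrow> (\<exists>i. o' i)" by blast
qed

lemma rval_GF:
  assumes s: "s \<le> 2*n+3"
  shows "b4_le b0011 (rval (Kn n :: 'p kripke) s (REx Alw (RProp p))) \<longleftrightarrow> (\<exists>\<pi>\<in>PR n s. \<forall>i. \<exists>j\<ge>i. odd (\<pi> j))"
proof -
  define pv where "pv = (\<lambda>\<pi>::nat\<Rightarrow>nat. [\<forall>i. odd (\<pi> i), \<exists>i. \<forall>j\<ge>i. odd (\<pi> j), \<forall>i. \<exists>j\<ge>i. odd (\<pi> j), \<exists>i. odd (\<pi> i)])"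
  have pvv: "pv \<pi> \<in> B4 \<and> (b4_le b0011 (pv \<pi>) \<longleftrightarrow> (\<forall>i. \<exists>j\<ge>i. odd (\<pi> j)))" for \<pi>
    unfolding pv_def by (rule vals) (rule seq_imps)+
  have pe: "path_val Alw (\<lambda>t. rval (Kn n :: 'p kripke) t (RProp p)) \<pi> = pv \<pi>" for \<pi>
    unfolding pv_def by (simp add: Kn_def bitf) blast
  define X where "X = {path_val Alw (\<lambda>t. rval (Kn n :: 'p kripke) t (RProp p)) \<pi> | \<pi>. \<pi> \<in> kpaths (Kn n :: 'p kripke) s}"
  have X': "X = pv ` PR n s" unfolding X_def pe PR_eq by auto
  have XB: "X \<subseteq> B4" using pvv unfolding X' by auto
  have Xne: "X \<noteq> {}" using PR_ex[OF s] unfolding X' by auto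
  have rv: "rval (Kn n :: 'p kripke) s (REx Alw (RProp p)) = b4_Max X" by (simp add: X_def)
  note m = b4max[OF XB Xne]
  have "b4_le b0011 (b4_Max X) \<longleftrightarrow> (\<exists>c\<in>X. b4_le b0011 c)"
  proof
    assume "b4_le b0011 (b4_Max X)" thus "\<exists>c\<in>X. b4_le b0011 c" using m by blast
  next
    assume "\<exists>c\<in>X. b4_le b0011 c"
    then obtain c where "c \<in> X" "b4_le b0011 c" by blast
    thus "b4_le b0011 (b4_Max X)" using m unfolding b4_le_def by (meson le_trans)
  qed
  also have "\<dots> \<longleftrightarrow> (\<exists>\<pi>\<in>PR n s. \<forall>i. \<exists>j\<ge>i. odd (\<pi> j))" unfolding X' using pvv by auto
  finally show ?thesis using rv by simp
qed

lemma GF_top: "\<exists>\<pi>\<in>PR n (2*n+2). \<forall>i. \<exists>j\<ge>i. odd (\<pi> j)"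
proof -
  define \<pi> where "\<pi> = (\<lambda>i::nat. if even i then 2*n+2 else 2*n+3)"
  have e1: "(2*n+2, 2*n+3) \<in> Rn n" unfolding KnR Ed_def by simp
  have e2: "(2*n+3, 2*n+2) \<in> Rn n" unfolding KnR Ed_def by simp
  have "(\<pi> i, \<pi> (Suc i)) \<in> Rn n" for i
  proof (cases "even i")
    case True thus ?thesis using e1 unfolding \<pi>_def by simp
  next
    case False thus ?thesis using e2 unfolding \<pi>_def by simp
  qed
  moreover have "\<pi> 0 = 2*n+2" unfolding \<pi>_def by simp
  ultimately have "\<pi> \<in> PR n (2*n+2)" unfolding PR_def by blast
  moreover have "odd (\<pi> (2*i+1))" for i unfolding \<pi>_def by simp
  hence "\<forall>i. \<exists>j\<ge>i. odd (\<pi> j)" by (metis le_add2 mult_2 add.commute le_add1 order_trans)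
  ultimately show ?thesis by blast
qed

lemma step_inv:
  assumes "(x,y) \<in> Rn n" "x \<le> 2*n+1" "x \<noteq> 1"
  shows "y \<le> 2*n+1 \<and> y \<noteq> 1 \<and> y div 2 \<le> x div 2 \<and> (odd x \<longrightarrow> y div 2 < x div 2)"
  using assms unfolding KnR Ed_def by (auto split: if_splits; presburger)

lemma noGF:
  assumes p: "\<pi> \<in> PR n (2*n)"
  shows "\<not> (\<forall>i. \<exists>j\<ge>i. odd (\<pi> j))"
proof
  assume gf: "\<forall>i. \<exists>j\<ge>i. odd (\<pi> j)"
  have p0: "\<pi> 0 = 2*n" and pe: "\<And>i. (\<pi> i, \<pi> (Suc i)) \<in> Rn n" using p by (auto simp: PR_def)
  have inv: "\<pi> i \<le> 2*n+1 \<and> \<pi> i \<noteq> 1" for i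
  proof (induction i)
    case 0 show ?case using p0 by simp
  next
    case (Suc i) thus ?case using step_inv[OF pe[of i]] by blast
  qed
  have dec: "\<pi> (Suc i) div 2 \<le> \<pi> i div 2" for i using step_inv[OF pe[of i]] inv[of i] by blast
  have sdec: "odd (\<pi> i) \<Longrightarrow> \<pi> (Suc i) div 2 < \<pi> i div 2" for i using step_inv[OF pe[of i]] inv[of i] by blast
  have mono: "i \<le> j \<Longrightarrow> \<pi> j div 2 \<le> \<pi> i div 2" for i j
    using lift_Suc_antimono_le[of "\<lambda>i. \<pi> i div 2"] dec by blast
  have "\<exists>j. \<pi> j div 2 + k \<le> n" for k
  proof (induction k)
    case 0 show ?case using p0 by (intro exI[of _ 0]) simp
  next
    case (Suc k)
    then obtain j where j: "\<pi> j div 2 + k \<le> n" by blast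
    obtain j' where j': "j' \<ge> j" "odd (\<pi> j')" using gf by blast
    have "\<pi> (Suc j') div 2 < \<pi> j div 2" using sdec[OF j'(2)] mono[OF j'(1)] by linarith
    thus ?case using j by (intro exI[of _ "Suc j'"]) linarith
  qed
  from this[of "Suc n"] show False by auto
qed

lemma part2: "\<exists>\<chi> :: 'p rctl. \<exists>u\<in>B4. \<forall>\<psi> :: 'p atl.
            \<not> (\<forall>K s. kripke_wf K \<and> s \<in> kS K \<longrightarrow>
                   (atl_sat (cgs_of K) s \<psi> \<longleftrightarrow> b4_le u (rval K s \<chi>)))"
proof (intro exI bexI allI notI)
  fix \<psi> :: "'p atl"
  let ?\<chi> = "REx Alw (RProp undefined) :: 'p rctl"
  assume h: "\<forall>K s. kripke_wf K \<and> s \<in> kS K \<longrightarrow>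
                   (atl_sat (cgs_of K) s \<psi> \<longleftrightarrow> b4_le b0011 (rval K s ?\<chi>))"
  define n where "n = depth \<psi>"
  have s1: "2*n+2 \<in> kS (Kn n :: 'p kripke)" by (simp add: KnS)
  have s2: "2*n \<in> kS (Kn n :: 'p kripke)" by (simp add: KnS)
  have h1: "atl_sat (cgs_of (Kn n :: 'p kripke)) (2*n+2) \<psi> \<longleftrightarrow> b4_le b0011 (rval (Kn n :: 'p kripke) (2*n+2) ?\<chi>)"
    using h[rule_format, OF conjI[OF Kn_wf s1]] .
  have h2: "atl_sat (cgs_of (Kn n :: 'p kripke)) (2*n) \<psi> \<longleftrightarrow> b4_le b0011 (rval (Kn n :: 'p kripke) (2*n) ?\<chi>)"
    using h[rule_format, OF conjI[OF Kn_wf s2]] .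
  have l1: "lev n (2*n+2) = n+1" using lev_even[of n "n+1"] by (simp add: algebra_simps)
  have l2: "lev n (2*n) = n" using lev_even[of n n] by simp
  have r: "rel n (depth \<psi>) (2*n+2) (2*n)" unfolding rel_def n_def[symmetric] using l1 l2 by simp
  have a: "atl_sat (cgs_of (Kn n :: 'p kripke)) (2*n+2) \<psi> \<longleftrightarrow> atl_sat (cgs_of (Kn n :: 'p kripke)) (2*n) \<psi>"
    using agree[of \<psi> n] r by blast
  have g1: "b4_le b0011 (rval (Kn n :: 'p kripke) (2*n+2) ?\<chi>)"
    using rval_GF[of "2*n+2" n undefined] GF_top[of n] by simp
  have g2: "\<not> b4_le b0011 (rval (Kn n :: 'p kripke) (2*n) ?\<chi>)"
    using rval_GF[of "2*n" n undefined] noGF[of _ n] by auto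
  show False using h1 h2 a g1 g2 by blast
next
  show "b0011 \<in> B4" by (simp add: B4_def)
qed


theorem corollary1:
  fixes dummy :: "'p::finite"
  shows "(\<exists>\<psi> :: 'p atl. \<forall>\<chi> :: 'p rctl. \<forall>u\<in>B4.
            \<not> (\<forall>G s. cgs_wf G \<and> s \<in> cSt G \<longrightarrow>
                   (atl_sat G s \<psi> \<longleftrightarrow> b4_le u (rval (kripke_of G) s \<chi>))))
       \<and> (\<exists>\<chi> :: 'p rctl. \<exists>u\<in>B4. \<forall>\<psi> :: 'p atl.
            \<not> (\<forall>K s. kripke_wf K \<and> s \<in> kS K \<longrightarrow>
                   (atl_sat (cgs_of K) s \<psi> \<longleftrightarrow> b4_le u (rval K s \<chi>))))"
  using part1 part2 by blast

end
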